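(* A finitely generated group $G$ admits a regular-preimage left-order if and only if $G$ is trivial.
   Context: A finite generating set of $G$ is a finite set $X$ with a surjective monoid homomorphism $\pi\colon X^*\to G$. For a class $\mathcal{C}$ of languages, a left-order $\prec$ on $G$ with positive cone $P=\{g:1\prec g\}$ is a $\mathcal{C}$-preimage left-order if, for a finite generating set $(X,\pi)$ of $G$, the full preimage $\pi^{-1}(P)\subseteq X^*$ belongs to $\mathcal{C}$. Regular-preimage means $\mathcal{C}$ is the class of languages accepted by finite state automata. *)

theory Defs
  imports "HOL-Algebra.Generated_Groups"
begin

definition finitely_generated :: "('g, 'b) monoid_scheme \<Rightarrow> bool" where
  "finitely_generated G \<longleftrightarrow>
     (\<exists>S. finite S \<and> S \<subseteq> carrier G \<and> generate G S = carrier G)"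

definition left_order :: "('g, 'b) monoid_scheme \<Rightarrow> ('g \<Rightarrow> 'g \<Rightarrow> bool) \<Rightarrow> bool" where
  "left_order G R \<longleftrightarrow>
     (\<forall>a\<in>carrier G. \<not> R a a) \<and>
     (\<forall>a\<in>carrier G. \<forall>b\<in>carrier G. \<forall>c\<in>carrier G. R a b \<longrightarrow> R b c \<longrightarrow> R a c) \<and>
     (\<forall>a\<in>carrier G. \<forall>b\<in>carrier G. a \<noteq> b \<longrightarrow> R a b \<or> R b a) \<and>
     (\<forall>g\<in>carrier G. \<forall>a\<in>carrier G. \<forall>b\<in>carrier G. R a b \<longrightarrow> R (g \<otimes>\<^bsub>G\<^esub> a) (g \<otimes>\<^bsub>G\<^esub> b))"

definition positive_cone :: "('g, 'b) monoid_scheme \<Rightarrow> ('g \<Rightarrow> 'g \<Rightarrow> bool) \<Rightarrow> 'g set" where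
  "positive_cone G R = {g \<in> carrier G. R \<one>\<^bsub>G\<^esub> g}"

definition word_eval :: "('g, 'b) monoid_scheme \<Rightarrow> ('x \<Rightarrow> 'g) \<Rightarrow> 'x list \<Rightarrow> 'g" where
  "word_eval G \<pi> w = foldr (\<lambda>x a. \<pi> x \<otimes>\<^bsub>G\<^esub> a) w \<one>\<^bsub>G\<^esub>"

definition finite_generating_set :: "('g, 'b) monoid_scheme \<Rightarrow> 'x set \<Rightarrow> ('x \<Rightarrow> 'g) \<Rightarrow> bool" where
  "finite_generating_set G X \<pi> \<longleftrightarrow>
     finite X \<and> (\<forall>x\<in>X. \<pi> x \<in> carrier G) \<and> word_eval G \<pi> ` lists X = carrier G"

definition regular_lang :: "'x set \<Rightarrow> 'x list set \<Rightarrow> bool" where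
  "regular_lang X L \<longleftrightarrow>
     (\<exists>(Q :: nat set) q0 \<delta> F. finite Q \<and> q0 \<in> Q \<and> (\<forall>q\<in>Q. \<forall>x\<in>X. \<delta> q x \<in> Q) \<and> F \<subseteq> Q \<and>
        L = {w \<in> lists X. foldl \<delta> q0 w \<in> F})"

definition regular_preimage_left_order :: "('g, 'b) monoid_scheme \<Rightarrow> ('g \<Rightarrow> 'g \<Rightarrow> bool) \<Rightarrow> bool" where
  "regular_preimage_left_order G R \<longleftrightarrow> left_order G R \<and>
     (\<exists>(X :: nat set) \<pi>. finite_generating_set G X \<pi> \<and>
        regular_lang X {w \<in> lists X. word_eval G \<pi> w \<in> positive_cone G R})"

end

theory Submission
  imports Defs
begin

lemma word_eval_closed:
  assumes "group G" "\<forall>x\<in>X. \<pi> x \<in> carrier G" "u \<in> lists X"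
  shows "word_eval G \<pi> u \<in> carrier G"
  using assms(3)
proof (induction u)
  case Nil then show ?case using assms(1) by (simp add: word_eval_def group.is_monoid monoid.one_closed)
next
  case (Cons a u) then show ?case using assms(1,2)
    by (simp add: word_eval_def group.is_monoid monoid.m_closed)
qed

lemma word_eval_append:
  assumes "group G" "\<forall>x\<in>X. \<pi> x \<in> carrier G" "u \<in> lists X" "z \<in> lists X"
  shows "word_eval G \<pi> (u @ z) = word_eval G \<pi> u \<otimes>\<^bsub>G\<^esub> word_eval G \<pi> z"
  using assms(3)
proof (induction u)
  case Nil then show ?case using assms word_eval_closed[OF assms(1,2,4)]
    by (simp add: word_eval_def group.is_monoid monoid.l_one)
next
  case (Cons a u)
  have c1: "word_eval G \<pi> u \<in> carrier G" using word_eval_closed[OF assms(1,2)] Cons by simp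
  have c2: "word_eval G \<pi> z \<in> carrier G" using word_eval_closed[OF assms(1,2,4)] .
  have "word_eval G \<pi> ((a # u) @ z) = \<pi> a \<otimes>\<^bsub>G\<^esub> word_eval G \<pi> (u @ z)"
    by (simp add: word_eval_def)
  also have "\<dots> = \<pi> a \<otimes>\<^bsub>G\<^esub> (word_eval G \<pi> u \<otimes>\<^bsub>G\<^esub> word_eval G \<pi> z)"
    using Cons by simp
  also have "\<dots> = (\<pi> a \<otimes>\<^bsub>G\<^esub> word_eval G \<pi> u) \<otimes>\<^bsub>G\<^esub> word_eval G \<pi> z"
    using Cons c1 c2 assms(1,2) by (simp add: group.is_monoid monoid.m_assoc)
  also have "\<dots> = word_eval G \<pi> (a # u) \<otimes>\<^bsub>G\<^esub> word_eval G \<pi> z"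
    by (simp add: word_eval_def)
  finally show ?case .
qed

lemma foldl_in_Q:
  assumes "\<forall>q\<in>Q. \<forall>x\<in>X. \<delta> q x \<in> Q" "q \<in> Q" "u \<in> lists X"
  shows "foldl \<delta> q u \<in> Q"
  using assms(3,2) by (induction u arbitrary: q) (auto simp: assms(1))

lemma finite_no_max:
  assumes fin: "finite A" and ne: "A \<noteq> {}"
    and irr: "\<forall>a\<in>A. \<not> R a a"
    and tr: "\<forall>a\<in>A. \<forall>b\<in>A. \<forall>c\<in>A. R a b \<longrightarrow> R b c \<longrightarrow> R a c"
    and up: "\<forall>x\<in>A. f x \<in> A \<and> R x (f x)"
  shows False
proof -
  define S where "S x = {y\<in>A. R y x}" for x
  have finS: "finite (S x)" for x using fin by (simp add: S_def)
  define m where "m = Max ((\<lambda>x. card (S x)) ` A)"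
  have "m \<in> (\<lambda>x. card (S x)) ` A" unfolding m_def using fin ne by (intro Max_in) auto
  then obtain x where x: "x \<in> A" "card (S x) = m" by blast
  have fx: "f x \<in> A" "R x (f x)" using up x by auto
  have sub: "insert x (S x) \<subseteq> S (f x)" proof
    fix y assume y: "y \<in> insert x (S x)"
    show "y \<in> S (f x)"
    proof (cases "y = x")
      case True then show ?thesis using fx x by (simp add: S_def)
    next
      case False
      then have "y \<in> A" "R y x" using y by (auto simp: S_def)
      then have "R y (f x)" using tr fx x by blast
      then show ?thesis using \<open>y \<in> A\<close> by (simp add: S_def)
    qed
  qed
  have c1: "card (insert x (S x)) \<le> card (S (f x))" using sub by (rule card_mono[OF finS])
  have "x \<notin> S x" using irr x by (simp add: S_def)
  then have c2: "card (insert x (S x)) = card (S x) + 1" using finS by simp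
  have c3: "card (S (f x)) \<le> m" unfolding m_def using fin fx by auto
  show False using x c1 c2 c3 by simp
qed

theorem propositionA4:
  fixes G :: "('g, 'b) monoid_scheme"
  assumes "group G" and "finitely_generated G"
  shows "(\<exists>R. regular_preimage_left_order G R) \<longleftrightarrow> carrier G = {\<one>\<^bsub>G\<^esub>}"
proof
  assume "\<exists>R. regular_preimage_left_order G R"
  then obtain R X \<pi> where lo: "left_order G R" and fg: "finite_generating_set G (X::nat set) \<pi>"
    and reg: "regular_lang X {w \<in> lists X. word_eval G \<pi> w \<in> positive_cone G R}"
    unfolding regular_preimage_left_order_def by blast
  obtain Q q0 \<delta> F where Q: "finite (Q::nat set)" "q0 \<in> Q" "\<forall>q\<in>Q. \<forall>x\<in>X. \<delta> q x \<in> Q" "F \<subseteq> Q"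
    and L: "{w \<in> lists X. word_eval G \<pi> w \<in> positive_cone G R} = {w \<in> lists X. foldl \<delta> q0 w \<in> F}"
    using reg unfolding regular_lang_def by blast
  have piX: "\<forall>x\<in>X. \<pi> x \<in> carrier G" and surj: "word_eval G \<pi> ` lists X = carrier G"
    using fg unfolding finite_generating_set_def by auto
  have grp: "group G" by fact
  interpret grpI: group G by (rule grp)
  have lirr: "\<And>a. a \<in> carrier G \<Longrightarrow> \<not> R a a"
    and ltot: "\<And>a b. a \<in> carrier G \<Longrightarrow> b \<in> carrier G \<Longrightarrow> a \<noteq> b \<Longrightarrow> R a b \<or> R b a"
    and ltr: "\<forall>a\<in>carrier G. \<forall>b\<in>carrier G. \<forall>c\<in>carrier G. R a b \<longrightarrow> R b c \<longrightarrow> R a c"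
    and lirr': "\<forall>a\<in>carrier G. \<not> R a a"
    and linv: "\<And>g a b. g \<in> carrier G \<Longrightarrow> a \<in> carrier G \<Longrightarrow> b \<in> carrier G \<Longrightarrow> R a b \<Longrightarrow> R (g \<otimes>\<^bsub>G\<^esub> a) (g \<otimes>\<^bsub>G\<^esub> b)"
    using lo unfolding left_order_def by blast+
  have one: "\<one>\<^bsub>G\<^esub> \<in> carrier G" using grp by (simp add: group.is_monoid monoid.one_closed)
  define w where "w g = (SOME u. u \<in> lists X \<and> word_eval G \<pi> u = g)" for g
  have w: "w g \<in> lists X \<and> word_eval G \<pi> (w g) = g" if "g \<in> carrier G" for g
  proof -
    have "\<exists>u. u \<in> lists X \<and> word_eval G \<pi> u = g" using surj that by force
    then show ?thesis unfolding w_def by (rule someI_ex)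
  qed
  define st where "st g = foldl \<delta> q0 (w g)" for g
  have memL: "R \<one>\<^bsub>G\<^esub> (word_eval G \<pi> u) \<longleftrightarrow> foldl \<delta> q0 u \<in> F" if "u \<in> lists X" for u
  proof -
    have "u \<in> {w \<in> lists X. word_eval G \<pi> w \<in> positive_cone G R} \<longleftrightarrow> u \<in> {w \<in> lists X. foldl \<delta> q0 w \<in> F}"
      using L by simp
    then show ?thesis using that word_eval_closed[OF grp piX that] by (simp add: positive_cone_def)
  qed
  have key: "R \<one>\<^bsub>G\<^esub> (g \<otimes>\<^bsub>G\<^esub> h) \<longleftrightarrow> R \<one>\<^bsub>G\<^esub> (k \<otimes>\<^bsub>G\<^esub> h)"
    if g: "g \<in> carrier G" and k: "k \<in> carrier G" and h: "h \<in> carrier G" and e: "st g = st k" for g k h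
  proof -
    have wg: "w g \<in> lists X" "word_eval G \<pi> (w g) = g" using w g by auto
    have wk: "w k \<in> lists X" "word_eval G \<pi> (w k) = k" using w k by auto
    have wh: "w h \<in> lists X" "word_eval G \<pi> (w h) = h" using w h by auto
    have "R \<one>\<^bsub>G\<^esub> (g \<otimes>\<^bsub>G\<^esub> h) \<longleftrightarrow> foldl \<delta> q0 (w g @ w h) \<in> F"
      using memL[of "w g @ w h"] wg wh word_eval_append[OF grp piX wg(1) wh(1)] by simp
    also have "\<dots> \<longleftrightarrow> foldl \<delta> q0 (w k @ w h) \<in> F" using e by (simp add: st_def)
    also have "\<dots> \<longleftrightarrow> R \<one>\<^bsub>G\<^esub> (k \<otimes>\<^bsub>G\<^esub> h)"
      using memL[of "w k @ w h"] wk wh word_eval_append[OF grp piX wk(1) wh(1)] by simp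
    finally show ?thesis .
  qed
  have inj: "inj_on st (carrier G)"
  proof (rule inj_onI)
    fix g k assume g: "g \<in> carrier G" and k: "k \<in> carrier G" and e: "st g = st k"
    have ig: "inv\<^bsub>G\<^esub> g \<in> carrier G" and ik: "inv\<^bsub>G\<^esub> k \<in> carrier G" using grp g k by auto
    have n1: "\<not> R \<one>\<^bsub>G\<^esub> (k \<otimes>\<^bsub>G\<^esub> inv\<^bsub>G\<^esub> g)"
      using key[OF g k ig e] lirr one grp g by (simp add: group.r_inv)
    moreover have n2: "\<not> R \<one>\<^bsub>G\<^esub> (g \<otimes>\<^bsub>G\<^esub> inv\<^bsub>G\<^esub> k)"
      using key[OF g k ik e] lirr one grp k by (simp add: group.r_inv)
    moreover have "k \<otimes>\<^bsub>G\<^esub> inv\<^bsub>G\<^esub> g = \<one>\<^bsub>G\<^esub>"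
    proof (rule ccontr)
      let ?a = "k \<otimes>\<^bsub>G\<^esub> inv\<^bsub>G\<^esub> g"
      assume ne: "?a \<noteq> \<one>\<^bsub>G\<^esub>"
      have ac: "?a \<in> carrier G" using grp k ig by simp
      have cc: "g \<otimes>\<^bsub>G\<^esub> inv\<^bsub>G\<^esub> k \<in> carrier G" using grp g ik by simp
      have "R \<one>\<^bsub>G\<^esub> ?a \<or> R ?a \<one>\<^bsub>G\<^esub>" using ltot ne ac one by blast
      moreover have "R ?a \<one>\<^bsub>G\<^esub> \<Longrightarrow> R \<one>\<^bsub>G\<^esub> (g \<otimes>\<^bsub>G\<^esub> inv\<^bsub>G\<^esub> k)"
      proof -
        assume r: "R ?a \<one>\<^bsub>G\<^esub>"
        have "R ((g \<otimes>\<^bsub>G\<^esub> inv\<^bsub>G\<^esub> k) \<otimes>\<^bsub>G\<^esub> ?a) ((g \<otimes>\<^bsub>G\<^esub> inv\<^bsub>G\<^esub> k) \<otimes>\<^bsub>G\<^esub> \<one>\<^bsub>G\<^esub>)"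
          using linv r ac one cc by blast
        moreover have "(g \<otimes>\<^bsub>G\<^esub> inv\<^bsub>G\<^esub> k) \<otimes>\<^bsub>G\<^esub> ?a = \<one>\<^bsub>G\<^esub>"
          using g k ig ik by (metis grpI.m_assoc grpI.m_closed grpI.l_inv grpI.l_one grpI.r_inv)
        moreover have "(g \<otimes>\<^bsub>G\<^esub> inv\<^bsub>G\<^esub> k) \<otimes>\<^bsub>G\<^esub> \<one>\<^bsub>G\<^esub> = g \<otimes>\<^bsub>G\<^esub> inv\<^bsub>G\<^esub> k"
          using grp cc by simp
        ultimately show ?thesis by simp
      qed
      ultimately show False using n1 n2 by blast
    qed
    ultimately show "g = k" using grp g k
      by (metis group.inv_equality group.inv_inv group.r_inv ig ik)
  qed
  have "st ` carrier G \<subseteq> Q" using w foldl_in_Q[OF Q(3) Q(2)] by (auto simp: st_def)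
  hence fin: "finite (carrier G)" using inj Q(1) by (meson finite_imageD finite_subset)
  show "carrier G = {\<one>\<^bsub>G\<^esub>}"
  proof (rule ccontr)
    assume "carrier G \<noteq> {\<one>\<^bsub>G\<^esub>}"
    then obtain a where a: "a \<in> carrier G" "a \<noteq> \<one>\<^bsub>G\<^esub>" using one by blast
    have ia: "inv\<^bsub>G\<^esub> a \<in> carrier G" using grp a by simp
    obtain g where g: "g \<in> carrier G" "R \<one>\<^bsub>G\<^esub> g"
    proof (cases "R \<one>\<^bsub>G\<^esub> a")
      case True then show ?thesis using that a by blast
    next
      case False
      then have "R a \<one>\<^bsub>G\<^esub>" using ltot a one by blast
      then have "R (inv\<^bsub>G\<^esub> a \<otimes>\<^bsub>G\<^esub> a) (inv\<^bsub>G\<^esub> a \<otimes>\<^bsub>G\<^esub> \<one>\<^bsub>G\<^esub>)" using linv a one ia by blast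
      then have "R \<one>\<^bsub>G\<^esub> (inv\<^bsub>G\<^esub> a)" using grp a ia by (simp add: group.l_inv)
      then show ?thesis using that ia by blast
    qed
    have "\<forall>x\<in>carrier G. x \<otimes>\<^bsub>G\<^esub> g \<in> carrier G \<and> R x (x \<otimes>\<^bsub>G\<^esub> g)"
    proof
      fix x assume x: "x \<in> carrier G"
      have "R (x \<otimes>\<^bsub>G\<^esub> \<one>\<^bsub>G\<^esub>) (x \<otimes>\<^bsub>G\<^esub> g)" using linv x g one by blast
      then show "x \<otimes>\<^bsub>G\<^esub> g \<in> carrier G \<and> R x (x \<otimes>\<^bsub>G\<^esub> g)" using grp x g by simp
    qed
    then show False using finite_no_max[OF fin _ _ _, of R "\<lambda>x. x \<otimes>\<^bsub>G\<^esub> g"] lirr' ltr one by blast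
  qed
next
  assume triv: "carrier G = {\<one>\<^bsub>G\<^esub>}"
  define R :: "'g \<Rightarrow> 'g \<Rightarrow> bool" where "R = (\<lambda>a b. False)"
  have lo: "left_order G R" using triv by (simp add: left_order_def R_def)
  have fg: "finite_generating_set G ({}::nat set) (\<lambda>x. \<one>\<^bsub>G\<^esub>)"
    using triv by (simp add: finite_generating_set_def word_eval_def)
  have rg: "regular_lang ({}::nat set) {w \<in> lists {}. word_eval G (\<lambda>x. \<one>\<^bsub>G\<^esub>) w \<in> positive_cone G R}"
    unfolding regular_lang_def
    by (rule exI[of _ "{0}"], rule exI[of _ 0], rule exI[of _ "\<lambda>q x. 0"], rule exI[of _ "{}"])
       (simp add: positive_cone_def R_def)
  show "\<exists>R. regular_preimage_left_order G R"
    unfolding regular_preimage_left_order_def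
    by (rule exI[of _ R], rule conjI[OF lo], rule exI[of _ "{}"], rule exI[of _ "\<lambda>x. \<one>\<^bsub>G\<^esub>"],
        rule conjI[OF fg], rule rg)
qed

end
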